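(* Let $\langle W,\varphi,(Y,\mathbb S,\sigma)\rangle$ be a monotone one-dimensional cocycle with skew-product system $(X,\mathbb S_+,\pi)$, $h=\mathrm{pr}_2$, and let $\tau\in\mathbb S_+$, $\tau>0$. Assume: (1) the discretization with step $\tau$ is strictly monotone, i.e. $u_1<u_2$ implies $\varphi(k\tau,u_1,y)<\varphi(k\tau,u_2,y)$ for all $k\in\mathbb N$, $y\in Y$; (2) $x_0\in X$ has precompact semi-trajectory $\{\pi(t,x_0):t\in\mathbb S_+\}$; (3) $y_0:=h(x_0)$ is asymptotically $\tau$-periodic. Let $q:=\lim_{k\to\infty}\sigma(k\tau,y_0)$, $X_q=h^{-1}(q)$, $\tilde\omega_{x_0}:=\omega_{x_0}\cap X_q$ and $P:=\pi(\tau,\cdot)$. Then: (i) $\omega_{x_0}$ is nonempty, compact and invariant ($\pi(t,\omega_{x_0})=\omega_{x_0}$ for $t\in\mathbb S_+$); (ii) $h(\omega_{x_0})=\omega_{y_0}$; (iii) $P(\tilde\omega_{x_0})=\tilde\omega_{x_0}$; (iv) every point of $\tilde\omega_{x_0}$ is $\tau$-periodic, i.e. $P(x)=x$ for all $x\in\tilde\omega_{x_0}$.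
   Context: $\mathbb S=\mathbb R$ or $\mathbb Z$, $\mathbb S_+=\{t\in\mathbb S:t\ge0\}$. $(Y,\mathbb S,\sigma)$ is a two-sided dynamical system on a complete metric space $Y$; $y$ is $\tau$-periodic if $\sigma(\tau,y)=y$, and $y_0$ is asymptotically $\tau$-periodic if there is a $\tau$-periodic $q$ with $\rho(\sigma(t,y_0),\sigma(t,q))\to0$ as $t\to+\infty$ (then $q=\lim_k\sigma(k\tau,y_0)$). $W\subseteq\mathbb R$ is an interval. A cocycle over $\sigma$ with fibre $W$ is a continuous $\varphi:\mathbb S_+\times W\times Y\to W$ with $\varphi(0,u,y)=u$, $\varphi(t+s,u,y)=\varphi(t,\varphi(s,u,y),\sigma(s,y))$; monotone means $u_1\le u_2\Rightarrow\varphi(t,u_1,y)\le\varphi(t,u_2,y)$. Skew-product: $X=W\times Y$, $\pi(t,(u,y))=(\varphi(t,u,y),\sigma(t,y))$, $h(u,y)=y$. $\omega_x$ ($\omega_y$) is the set of limits of $\pi(t_k,x)$ ($\sigma(t_k,y)$) with $t_k\to+\infty$, $t_k\in\mathbb S_+$. A point $x\in X$ is $\tau$-periodic if $\pi(\tau,x)=x$. *)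

theory Defs
  imports "HOL-Analysis.Analysis"
begin

definition time_set :: "real set \<Rightarrow> bool" where
  "time_set S \<longleftrightarrow> S = UNIV \<or> S = \<int>"

definition nonneg_times :: "real set \<Rightarrow> real set" where
  "nonneg_times S = {t \<in> S. t \<ge> 0}"

definition dyn_system :: "real set \<Rightarrow> (real \<Rightarrow> 'y::metric_space \<Rightarrow> 'y) \<Rightarrow> bool" where
  "dyn_system S \<sigma> \<longleftrightarrow>
     (\<forall>y. \<sigma> 0 y = y) \<and>
     (\<forall>t\<in>S. \<forall>s\<in>S. \<forall>y. \<sigma> (t + s) y = \<sigma> t (\<sigma> s y)) \<and>
     continuous_on (S \<times> UNIV) (\<lambda>(t, y). \<sigma> t y)"

definition cocycle :: "real set \<Rightarrow> real set \<Rightarrow> (real \<Rightarrow> 'y::metric_space \<Rightarrow> 'y)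
    \<Rightarrow> (real \<Rightarrow> real \<Rightarrow> 'y \<Rightarrow> real) \<Rightarrow> bool" where
  "cocycle S W \<sigma> phi \<longleftrightarrow>
     (\<forall>t\<in>nonneg_times S. \<forall>u\<in>W. \<forall>y. phi t u y \<in> W) \<and>
     continuous_on (nonneg_times S \<times> W \<times> UNIV) (\<lambda>(t, u, y). phi t u y) \<and>
     (\<forall>u\<in>W. \<forall>y. phi 0 u y = u) \<and>
     (\<forall>t\<in>nonneg_times S. \<forall>s\<in>nonneg_times S. \<forall>u\<in>W. \<forall>y.
        phi (t + s) u y = phi t (phi s u y) (\<sigma> s y))"

definition monotone_cocycle :: "real set \<Rightarrow> real set \<Rightarrow> (real \<Rightarrow> real \<Rightarrow> 'y \<Rightarrow> real) \<Rightarrow> bool" where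
  "monotone_cocycle S W phi \<longleftrightarrow>
     (\<forall>t\<in>nonneg_times S. \<forall>u1\<in>W. \<forall>u2\<in>W. \<forall>y. u1 \<le> u2 \<longrightarrow> phi t u1 y \<le> phi t u2 y)"

definition skew_product :: "(real \<Rightarrow> 'y \<Rightarrow> 'y) \<Rightarrow> (real \<Rightarrow> real \<Rightarrow> 'y \<Rightarrow> real)
    \<Rightarrow> real \<Rightarrow> real \<times> 'y \<Rightarrow> real \<times> 'y" where
  "skew_product \<sigma> phi t x = (phi t (fst x) (snd x), \<sigma> t (snd x))"

definition omega_limit :: "real set \<Rightarrow> (real \<Rightarrow> 'a::topological_space \<Rightarrow> 'a) \<Rightarrow> 'a \<Rightarrow> 'a set" where
  "omega_limit S f x = {p. \<exists>tk::nat \<Rightarrow> real. (\<forall>k. tk k \<in> nonneg_times S) \<and>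
      filterlim tk at_top sequentially \<and> (\<lambda>k. f (tk k) x) \<longlonglongrightarrow> p}"

text \<open>Precompactness of a subset A of the space X (closure in X compact):
  A is contained in a compact subset of X.\<close>
definition precompact_in :: "'a::metric_space set \<Rightarrow> 'a set \<Rightarrow> bool" where
  "precompact_in X A \<longleftrightarrow> (\<exists>K. compact K \<and> K \<subseteq> X \<and> A \<subseteq> K)"

definition asympt_periodic :: "real set \<Rightarrow> (real \<Rightarrow> 'y::metric_space \<Rightarrow> 'y) \<Rightarrow> real \<Rightarrow> 'y \<Rightarrow> bool" where
  "asympt_periodic S \<sigma> tau y0 \<longleftrightarrow>
     (\<exists>q. \<sigma> tau q = q \<and>
        (\<forall>e>0. \<exists>T. \<forall>t\<in>nonneg_times S. t \<ge> T \<longrightarrow> dist (\<sigma> t y0) (\<sigma> t q) < e))"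

end

theory Submission
  imports Defs
begin

lemma trap_up:
  fixes u :: "nat \<Rightarrow> real" and g :: "nat \<Rightarrow> real \<Rightarrow> real" and f :: "real \<Rightarrow> real"
  assumes W: "is_interval W"
    and uW: "\<And>n. u n \<in> W"
    and lo: "lo \<in> W" "\<And>n. lo \<le> u n"
    and rec: "\<And>n. u (Suc n) = g n (u n)"
    and mono: "\<And>n a b. a \<in> W \<Longrightarrow> b \<in> W \<Longrightarrow> a \<le> b \<Longrightarrow> g n a \<le> g n b"
    and conv: "\<And>w. w \<in> W \<Longrightarrow> (\<lambda>n. g n w) \<longlonglongrightarrow> f w"
    and fc: "continuous_on W f"
    and v: "v \<in> W"
    and lp: "\<And>e N. e > 0 \<Longrightarrow> \<exists>n\<ge>N. \<bar>u n - v\<bar> < e"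
  shows "f v \<le> v"
proof (rule ccontr)
  assume "\<not> f v \<le> v"
  define e where "e = f v - v"
  have e: "e > 0" using \<open>\<not> f v \<le> v\<close> e_def by simp
  have lov: "lo \<le> v"
  proof (rule ccontr)
    assume "\<not> lo \<le> v"
    then obtain n where "\<bar>u n - v\<bar> < lo - v" using lp[of "lo - v" 0] by auto
    with lo(2)[of n] show False by linarith
  qed
  obtain eta where eta: "eta > 0" "\<And>w. w \<in> W \<Longrightarrow> dist w v < eta \<Longrightarrow> dist (f w) (f v) < e/2"
  proof -
    have "e/2 > 0" using e by simp
    have "\<exists>d>0. \<forall>w\<in>W. dist w v < d \<longrightarrow> dist (f w) (f v) < e/2"
      using fc v \<open>e/2 > 0\<close> unfolding continuous_on_iff by blast
    then show ?thesis using that by auto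
  qed
  define a where "a = max (v - eta/2) lo"
  have "lo \<le> a" "a \<le> v" using lov eta unfolding a_def by auto
  then have aW: "a \<in> W" using W lo(1) v unfolding is_interval_1 by blast
  have "dist a v < eta" using eta lov unfolding a_def dist_real_def by auto
  then have "\<bar>f a - f v\<bar> < e/2" using eta(2)[OF aW] unfolding dist_real_def by blast
  then have fa: "f a > v + e/2" using e_def by arith
  have "\<forall>\<^sub>F n in sequentially. v + e/4 < g n a"
    using order_tendstoD(1)[OF conv[OF aW], of "v + e/4"] fa e by auto
  then obtain N0 where N0: "\<And>n. n \<ge> N0 \<Longrightarrow> v + e/4 < g n a"
    unfolding eventually_sequentially by auto
  obtain n1 where n1: "n1 \<ge> N0" "\<bar>u n1 - v\<bar> < eta/2"
    using lp[of "eta/2" N0] eta by auto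
  have un1: "u n1 \<ge> a" using n1(2) lo(2)[of n1] unfolding a_def by arith
  have av: "a \<le> v" using lov eta unfolding a_def by auto
  have "u (n1 + m) \<ge> a \<and> u (Suc (n1 + m)) > v + e/4" for m
  proof (induction m)
    case 0
    have "g n1 (u n1) \<ge> g n1 a" using mono[OF aW uW un1] .
    then show ?case using un1 N0[OF n1(1)] rec[of n1] by simp
  next
    case (Suc m)
    then have h: "u (n1 + Suc m) \<ge> a" using av e by simp
    have "g (n1 + Suc m) (u (n1 + Suc m)) \<ge> g (n1 + Suc m) a" using mono[OF aW uW h] .
    then show ?case using h N0[of "n1 + Suc m"] n1(1) rec[of "n1 + Suc m"] by simp
  qed
  then have big: "\<And>n. n \<ge> Suc n1 \<Longrightarrow> u n > v + e/4"
    by (metis Suc_le_D add_Suc_right le_add_diff_inverse Suc_le_mono)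
  obtain n where "n \<ge> Suc n1" "\<bar>u n - v\<bar> < e/4" using lp[of "e/4" "Suc n1"] e by auto
  with big[of n] show False by linarith
qed

lemma trap_down:
  fixes u :: "nat \<Rightarrow> real" and g :: "nat \<Rightarrow> real \<Rightarrow> real" and f :: "real \<Rightarrow> real"
  assumes W: "is_interval W"
    and uW: "\<And>n. u n \<in> W"
    and hi: "hi \<in> W" "\<And>n. u n \<le> hi"
    and rec: "\<And>n. u (Suc n) = g n (u n)"
    and mono: "\<And>n a b. a \<in> W \<Longrightarrow> b \<in> W \<Longrightarrow> a \<le> b \<Longrightarrow> g n a \<le> g n b"
    and conv: "\<And>w. w \<in> W \<Longrightarrow> (\<lambda>n. g n w) \<longlonglongrightarrow> f w"
    and fc: "continuous_on W f"
    and v: "v \<in> W"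
    and lp: "\<And>e N. e > 0 \<Longrightarrow> \<exists>n\<ge>N. \<bar>u n - v\<bar> < e"
  shows "v \<le> f v"
proof (rule ccontr)
  assume "\<not> v \<le> f v"
  define e where "e = v - f v"
  have e: "e > 0" using \<open>\<not> v \<le> f v\<close> e_def by simp
  have hiv: "v \<le> hi"
  proof (rule ccontr)
    assume "\<not> v \<le> hi"
    then obtain n where "\<bar>u n - v\<bar> < v - hi" using lp[of "v - hi" 0] by auto
    with hi(2)[of n] show False by linarith
  qed
  obtain eta where eta: "eta > 0" "\<And>w. w \<in> W \<Longrightarrow> dist w v < eta \<Longrightarrow> dist (f w) (f v) < e/2"
  proof -
    have "e/2 > 0" using e by simp
    have "\<exists>d>0. \<forall>w\<in>W. dist w v < d \<longrightarrow> dist (f w) (f v) < e/2"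
      using fc v \<open>e/2 > 0\<close> unfolding continuous_on_iff by blast
    then show ?thesis using that by auto
  qed
  define a where "a = min (v + eta/2) hi"
  have "a \<le> hi" "v \<le> a" using hiv eta unfolding a_def by auto
  then have aW: "a \<in> W" using W hi(1) v unfolding is_interval_1 by blast
  have "dist a v < eta" using eta hiv unfolding a_def dist_real_def by auto
  then have "\<bar>f a - f v\<bar> < e/2" using eta(2)[OF aW] unfolding dist_real_def by blast
  then have fa: "f a < v - e/2" using e_def by arith
  have "\<forall>\<^sub>F n in sequentially. g n a < v - e/4"
    using order_tendstoD(2)[OF conv[OF aW], of "v - e/4"] fa e by auto
  then obtain N0 where N0: "\<And>n. n \<ge> N0 \<Longrightarrow> g n a < v - e/4"
    unfolding eventually_sequentially by auto
  obtain n1 where n1: "n1 \<ge> N0" "\<bar>u n1 - v\<bar> < eta/2"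
    using lp[of "eta/2" N0] eta by auto
  have un1: "u n1 \<le> a" using n1(2) hi(2)[of n1] unfolding a_def by arith
  have av: "v \<le> a" using hiv eta unfolding a_def by auto
  have "u (n1 + m) \<le> a \<and> u (Suc (n1 + m)) < v - e/4" for m
  proof (induction m)
    case 0
    have "g n1 (u n1) \<le> g n1 a" using mono[OF uW aW un1] .
    then show ?case using un1 N0[OF n1(1)] rec[of n1] by simp
  next
    case (Suc m)
    then have h: "u (n1 + Suc m) \<le> a" using av e by simp
    have "g (n1 + Suc m) (u (n1 + Suc m)) \<le> g (n1 + Suc m) a" using mono[OF uW aW h] .
    then show ?case using h N0[of "n1 + Suc m"] n1(1) rec[of "n1 + Suc m"] by simp
  qed
  then have big: "\<And>n. n \<ge> Suc n1 \<Longrightarrow> u n < v - e/4"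
    by (metis Suc_le_D add_Suc_right le_add_diff_inverse Suc_le_mono)
  obtain n where "n \<ge> Suc n1" "\<bar>u n - v\<bar> < e/4" using lp[of "e/4" "Suc n1"] e by auto
  with big[of n] show False by linarith
qed

lemma S_facts:
  assumes "time_set S"
  shows "0 \<in> S" "\<And>t s. t \<in> S \<Longrightarrow> s \<in> S \<Longrightarrow> t + s \<in> S"
    "\<And>t s. t \<in> S \<Longrightarrow> s \<in> S \<Longrightarrow> t - s \<in> S"
    "\<And>n. real n \<in> S" "\<And>t n. t \<in> S \<Longrightarrow> real n * t \<in> S" "closed S"
  using assms unfolding time_set_def
  by (auto intro: Ints_mult Ints_add Ints_diff)

lemma nn_add: "time_set S \<Longrightarrow> t \<in> nonneg_times S \<Longrightarrow> s \<in> nonneg_times S \<Longrightarrow> t + s \<in> nonneg_times S"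
  using S_facts(2) unfolding nonneg_times_def by auto

lemma omega_char:
  fixes f :: "real \<Rightarrow> 'a::metric_space \<Rightarrow> 'a"
  shows "omega_limit S f x = {p. \<forall>e>0. \<forall>T. \<exists>t\<in>nonneg_times S. t \<ge> T \<and> dist (f t x) p < e}"
proof (intro set_eqI iffI)
  fix p assume "p \<in> omega_limit S f x"
  then obtain tk where tk: "\<And>k. tk k \<in> nonneg_times S" "filterlim tk at_top sequentially"
    "(\<lambda>k. f (tk k) x) \<longlonglongrightarrow> p" unfolding omega_limit_def by auto
  show "p \<in> {p. \<forall>e>0. \<forall>T. \<exists>t\<in>nonneg_times S. t \<ge> T \<and> dist (f t x) p < e}"
  proof (intro CollectI allI impI)
    fix e :: real and T assume e: "e > 0"
    have ev1: "\<forall>\<^sub>F k in sequentially. T \<le> tk k"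
      using tk(2) unfolding filterlim_at_top by blast
    have ev2: "\<forall>\<^sub>F k in sequentially. dist (f (tk k) x) p < e"
      using tendstoD[OF tk(3) e] .
    have "\<forall>\<^sub>F k in sequentially. T \<le> tk k \<and> dist (f (tk k) x) p < e"
      using eventually_conj[OF ev1 ev2] .
    then obtain k where "T \<le> tk k" "dist (f (tk k) x) p < e"
      unfolding eventually_sequentially by auto
    then show "\<exists>t\<in>nonneg_times S. t \<ge> T \<and> dist (f t x) p < e" using tk(1) by auto
  qed
next
  fix p assume "p \<in> {p. \<forall>e>0. \<forall>T. \<exists>t\<in>nonneg_times S. t \<ge> T \<and> dist (f t x) p < e}"
  then have H: "\<And>e T. e > 0 \<Longrightarrow> \<exists>t\<in>nonneg_times S. t \<ge> T \<and> dist (f t x) p < e" by auto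
  have "\<forall>k. \<exists>t. t \<in> nonneg_times S \<and> t \<ge> real k \<and> dist (f t x) p < inverse (real (Suc k))"
  proof
    fix k
    have "inverse (real (Suc k)) > 0" by simp
    from H[OF this, of "real k"] show "\<exists>t. t \<in> nonneg_times S \<and> t \<ge> real k \<and> dist (f t x) p < inverse (real (Suc k))"
      by blast
  qed
  from choice[OF this] obtain tk where tk0: "\<forall>k. tk k \<in> nonneg_times S \<and> tk k \<ge> real k \<and> dist (f (tk k) x) p < inverse (real (Suc k))"
    by blast
  then have tk: "\<And>k. tk k \<in> nonneg_times S" "\<And>k. tk k \<ge> real k"
    "\<And>k. dist (f (tk k) x) p < inverse (real (Suc k))" by auto
  have ev: "\<forall>\<^sub>F k in sequentially. real k \<le> tk k" by (intro always_eventually allI tk(2))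
  have "filterlim tk at_top sequentially"
    by (rule filterlim_at_top_mono[OF filterlim_real_sequentially ev])
  moreover have "(\<lambda>k. f (tk k) x) \<longlonglongrightarrow> p"
  proof (rule tendsto_dist_iff[THEN iffD2], rule tendsto_sandwich[OF _ _ tendsto_const LIMSEQ_inverse_real_of_nat])
    show "\<forall>\<^sub>F n in sequentially. 0 \<le> dist (f (tk n) x) p" by simp
    show "\<forall>\<^sub>F n in sequentially. dist (f (tk n) x) p \<le> inverse (real (Suc n))"
      by (intro always_eventually allI less_imp_le tk(3))
  qed
  ultimately show "p \<in> omega_limit S f x" unfolding omega_limit_def using tk(1) by blast
qed

lemma omega_closed:
  fixes f :: "real \<Rightarrow> 'a::metric_space \<Rightarrow> 'a"
  shows "closed (omega_limit S f x)"
  unfolding closed_sequential_limits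
proof (intro allI impI)
  fix xs l assume A: "(\<forall>n. xs n \<in> omega_limit S f x) \<and> xs \<longlonglongrightarrow> l"
  show "l \<in> omega_limit S f x"
    unfolding omega_char
  proof (intro CollectI allI impI)
    fix e :: real and T assume e: "e > 0"
    have e2: "e/2 > 0" using e by simp
    have "\<forall>\<^sub>F n in sequentially. dist (xs n) l < e/2" using A tendstoD e2 by blast
    then obtain n where n: "dist (xs n) l < e/2"
      unfolding eventually_sequentially by blast
    have "xs n \<in> omega_limit S f x" using A by auto
    then have "\<exists>t\<in>nonneg_times S. t \<ge> T \<and> dist (f t x) (xs n) < e/2"
      unfolding omega_char using e2 by blast
    then obtain t where t: "t \<in> nonneg_times S" "t \<ge> T" "dist (f t x) (xs n) < e/2"
      by blast
    have "dist (f t x) l < e" using t(3) n dist_triangle[of "f t x" l "xs n"] by linarith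
    then show "\<exists>t\<in>nonneg_times S. t \<ge> T \<and> dist (f t x) l < e" using t by auto
  qed
qed

lemma floor_dec:
  fixes t tau :: real
  assumes "tau > 0" "t \<ge> 0"
  shows "real (nat \<lfloor>t/tau\<rfloor>) * tau \<le> t" "t < real (nat \<lfloor>t/tau\<rfloor>) * tau + tau"
proof -
  have z0: "\<lfloor>t/tau\<rfloor> \<ge> 0" using assms by simp
  then have eq: "real (nat \<lfloor>t/tau\<rfloor>) = of_int \<lfloor>t/tau\<rfloor>" by simp
  have "of_int \<lfloor>t/tau\<rfloor> \<le> t/tau" by (rule of_int_floor_le)
  then show "real (nat \<lfloor>t/tau\<rfloor>) * tau \<le> t" using assms(1) eq by (simp add: le_divide_eq)
  have "t/tau < of_int \<lfloor>t/tau\<rfloor> + 1" by (rule real_of_int_floor_add_one_gt)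
  then have "t < (of_int \<lfloor>t/tau\<rfloor> + 1) * tau" using pos_divide_less_eq[OF assms(1)] by blast
  then show "t < real (nat \<lfloor>t/tau\<rfloor>) * tau + tau" using eq by (simp add: algebra_simps)
qed

theorem mainTheorem6:
  fixes S W :: "real set"
    and \<sigma> :: "real \<Rightarrow> 'y::complete_space \<Rightarrow> 'y"
    and phi :: "real \<Rightarrow> real \<Rightarrow> 'y \<Rightarrow> real"
    and tau :: real and x0 :: "real \<times> 'y"
  assumes S: "time_set S"
    and W: "is_interval W"
    and sys: "dyn_system S \<sigma>"
    and coc: "cocycle S W \<sigma> phi"
    and mono: "monotone_cocycle S W phi"
    and tau: "tau \<in> S" "tau > 0"
    and strict: "\<forall>k::nat. \<forall>y. \<forall>u1\<in>W. \<forall>u2\<in>W.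
                   u1 < u2 \<longrightarrow> phi (real k * tau) u1 y < phi (real k * tau) u2 y"
    and x0: "x0 \<in> W \<times> UNIV"
    and precomp: "precompact_in (W \<times> UNIV)
                    {skew_product \<sigma> phi t x0 | t. t \<in> nonneg_times S}"
    and asy: "asympt_periodic S \<sigma> tau (snd x0)"
  shows "omega_limit S (skew_product \<sigma> phi) x0 \<noteq> {}
       \<and> compact (omega_limit S (skew_product \<sigma> phi) x0)
       \<and> (\<forall>t\<in>nonneg_times S. skew_product \<sigma> phi t ` omega_limit S (skew_product \<sigma> phi) x0
                                = omega_limit S (skew_product \<sigma> phi) x0)
       \<and> snd ` omega_limit S (skew_product \<sigma> phi) x0 = omega_limit S \<sigma> (snd x0)
       \<and> (\<forall>q. (\<lambda>k::nat. \<sigma> (real k * tau) (snd x0)) \<longlonglongrightarrow> q \<longrightarrow>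
            (let \<Omega> = omega_limit S (skew_product \<sigma> phi) x0 \<inter> {x. snd x = q}
             in skew_product \<sigma> phi tau ` \<Omega> = \<Omega>
                \<and> (\<forall>x\<in>\<Omega>. skew_product \<sigma> phi tau x = x)))"
proof -
  let ?pi = "skew_product \<sigma> phi"
  let ?om = "omega_limit S (skew_product \<sigma> phi) x0"
  let ?X = "W \<times> (UNIV :: 'y set)"
  note SF = S_facts[OF S]
  have sys0: "\<forall>y. \<sigma> 0 y = y" and sysadd: "\<forall>t\<in>S. \<forall>s\<in>S. \<forall>y. \<sigma> (t + s) y = \<sigma> t (\<sigma> s y)"
    and syscont: "continuous_on (S \<times> UNIV) (\<lambda>(t, y). \<sigma> t y)"
    using sys unfolding dyn_system_def by auto
  have cW: "\<forall>t\<in>nonneg_times S. \<forall>u\<in>W. \<forall>y. phi t u y \<in> W"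
    and ccont: "continuous_on (nonneg_times S \<times> W \<times> UNIV) (\<lambda>(t, u, y). phi t u y)"
    and c0: "\<forall>u\<in>W. \<forall>y. phi 0 u y = u"
    and cadd: "\<forall>t\<in>nonneg_times S. \<forall>s\<in>nonneg_times S. \<forall>u\<in>W. \<forall>y.
        phi (t + s) u y = phi t (phi s u y) (\<sigma> s y)"
    using coc unfolding cocycle_def by auto
  have nnS: "\<And>t. t \<in> nonneg_times S \<Longrightarrow> t \<in> S" unfolding nonneg_times_def by auto
  have nnI: "\<And>t. t \<in> S \<Longrightarrow> t \<ge> 0 \<Longrightarrow> t \<in> nonneg_times S" unfolding nonneg_times_def by auto
  have nnge: "\<And>t. t \<in> nonneg_times S \<Longrightarrow> t \<ge> 0" unfolding nonneg_times_def by auto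
  have tauS: "tau \<in> nonneg_times S" using tau nnI by auto
  have piX: "\<And>t x. t \<in> nonneg_times S \<Longrightarrow> x \<in> ?X \<Longrightarrow> ?pi t x \<in> ?X"
    using cW unfolding skew_product_def by (auto simp: mem_Times_iff)
  have pi0: "\<And>x. x \<in> ?X \<Longrightarrow> ?pi 0 x = x"
    using c0 sys0 unfolding skew_product_def by (auto simp: mem_Times_iff)
  have piadd: "\<And>t s x. t \<in> nonneg_times S \<Longrightarrow> s \<in> nonneg_times S \<Longrightarrow> x \<in> ?X \<Longrightarrow>
      ?pi (t + s) x = ?pi t (?pi s x)"
    using cadd sysadd nnS unfolding skew_product_def by (auto simp: mem_Times_iff)
  have pisnd: "\<And>t x. snd (?pi t x) = \<sigma> t (snd x)" unfolding skew_product_def by simp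
  have pifst: "\<And>t x. fst (?pi t x) = phi t (fst x) (snd x)" unfolding skew_product_def by simp
  have picont: "continuous_on (nonneg_times S \<times> ?X) (\<lambda>p. ?pi (fst p) (snd p))"
  proof -
    let ?D = "nonneg_times S \<times> ?X"
    have eq1: "(\<lambda>(t, u, y). phi t u y) = (\<lambda>p. phi (fst p) (fst (snd p)) (snd (snd p)))"
      by (auto simp: fun_eq_iff)
    have 1: "continuous_on ?D (\<lambda>p. phi (fst p) (fst (snd p)) (snd (snd p)))"
      using ccont[unfolded eq1] .
    have h3: "continuous_on ?D (\<lambda>p. (fst p, snd (snd p)))" by (intro continuous_intros)
    have h4: "(\<lambda>p. (fst p, snd (snd p))) ` ?D \<subseteq> S \<times> UNIV" using nnS by auto
    have "continuous_on ?D (\<lambda>p. (\<lambda>(t, y). \<sigma> t y) (fst p, snd (snd p)))"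
      by (rule continuous_on_compose2[OF syscont h3 h4])
    then have 2: "continuous_on ?D (\<lambda>p. \<sigma> (fst p) (snd (snd p)))" by simp
    show ?thesis unfolding skew_product_def using continuous_on_Pair[OF 1 2] by simp
  qed
  have picont_t: "continuous_on ?X (?pi t)" if t: "t \<in> nonneg_times S" for t
  proof -
    have h1: "continuous_on ?X (\<lambda>x. (t, x))" by (intro continuous_intros)
    have h2: "(\<lambda>x. (t, x)) ` ?X \<subseteq> nonneg_times S \<times> ?X" using t by auto
    have "continuous_on ?X (\<lambda>x. (\<lambda>p. ?pi (fst p) (snd p)) (t, x))"
      by (rule continuous_on_compose2[OF picont h1 h2])
    then show ?thesis by simp
  qed
  obtain K where K: "compact K" "K \<subseteq> ?X" and Ktr: "{?pi t x0 | t. t \<in> nonneg_times S} \<subseteq> K"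
    using precomp unfolding precompact_in_def by blast
  have trK: "?pi t x0 \<in> K" if "t \<in> nonneg_times S" for t
    using that by (intro subsetD[OF Ktr]) blast
  have "0 \<in> nonneg_times S" using SF(1) nnI by simp
  then have "?pi 0 x0 \<in> K" by (rule trK)
  then have x0K: "x0 \<in> K" by (simp only: pi0[OF x0])
  have seqK: "\<exists>l r. l \<in> K \<and> strict_mono (r :: nat \<Rightarrow> nat) \<and> (xs \<circ> r) \<longlonglongrightarrow> l"
    if "\<And>n. xs n \<in> K" for xs
  proof -
    have "\<forall>n. xs n \<in> K" using that by blast
    from seq_compactE[OF compact_imp_seq_compact[OF K(1)] this] obtain l and r :: "nat \<Rightarrow> nat"
      where "l \<in> K" "strict_mono r" "(xs \<circ> r) \<longlonglongrightarrow> l" .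
    then show ?thesis by blast
  qed
  have omE: "\<exists>tk. (\<forall>k. tk k \<in> nonneg_times S) \<and> filterlim tk at_top sequentially
      \<and> (\<lambda>k. ?pi (tk k) x0) \<longlonglongrightarrow> p" if "p \<in> ?om" for p
    using that unfolding omega_limit_def by simp
  have omI: "p \<in> ?om" if "\<And>k. tk k \<in> nonneg_times S" "filterlim tk at_top sequentially"
      "(\<lambda>k. ?pi (tk k) x0) \<longlonglongrightarrow> p" for p tk
    using that unfolding omega_limit_def by blast
  have omK: "?om \<subseteq> K"
  proof
    fix p assume "p \<in> ?om"
    then obtain tk where tk: "\<And>k. tk k \<in> nonneg_times S" "(\<lambda>k. ?pi (tk k) x0) \<longlonglongrightarrow> p"
      using omE by blast
    show "p \<in> K" by (rule closed_sequentially[OF compact_imp_closed[OF K(1)] trK[OF tk(1)] tk(2)])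
  qed
  have ne: "?om \<noteq> {}"
  proof -
    have rS: "\<And>k. real k \<in> nonneg_times S" using SF(4) nnI by auto
    obtain l r where lr: "l \<in> K" "strict_mono (r :: nat \<Rightarrow> nat)"
        "((\<lambda>k. ?pi (real k) x0) \<circ> r) \<longlonglongrightarrow> l"
      using seqK[of "\<lambda>k. ?pi (real k) x0"] trK[OF rS] by blast
    have "filterlim (\<lambda>k. real (r k)) at_top sequentially"
      by (rule filterlim_compose[OF filterlim_real_sequentially filterlim_subseq[OF lr(2)]])
    moreover have "(\<lambda>k. ?pi (real (r k)) x0) \<longlonglongrightarrow> l" using lr(3) by (simp add: comp_def)
    ultimately have "l \<in> ?om" using omI[of "\<lambda>k. real (r k)"] rS by blast
    then show ?thesis by blast
  qed
  have cpt: "compact ?om"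
  proof -
    have "compact (K \<inter> ?om)" by (rule compact_Int_closed[OF K(1) omega_closed])
    moreover have "K \<inter> ?om = ?om" using omK by blast
    ultimately show ?thesis by simp
  qed
  have inv: "?pi t ` ?om = ?om" if t: "t \<in> nonneg_times S" for t
  proof
    show "?pi t ` ?om \<subseteq> ?om"
    proof
      fix z assume "z \<in> ?pi t ` ?om"
      then obtain p where p: "p \<in> ?om" "z = ?pi t p" by blast
      obtain tk where tk: "\<And>k. tk k \<in> nonneg_times S" "filterlim tk at_top sequentially"
          "(\<lambda>k. ?pi (tk k) x0) \<longlonglongrightarrow> p"
        using omE[OF p(1)] by blast
      have pX: "p \<in> ?X" using p(1) omK K(2) by blast
      have inX: "\<forall>k. ?pi (tk k) x0 \<in> ?X" using piX[OF tk(1) x0] by blast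
      have "(\<lambda>k. ?pi t (?pi (tk k) x0)) \<longlonglongrightarrow> ?pi t p"
        by (rule continuous_on_tendsto_compose[OF picont_t[OF t] tk(3) pX always_eventually[OF inX]])
      moreover have "\<And>k. ?pi t (?pi (tk k) x0) = ?pi (t + tk k) x0"
        using piadd[OF t tk(1) x0] by simp
      ultimately have c: "(\<lambda>k. ?pi (t + tk k) x0) \<longlonglongrightarrow> z" using p(2) by simp
      have f: "filterlim (\<lambda>k. t + tk k) at_top sequentially"
        by (rule filterlim_tendsto_add_at_top[OF tendsto_const tk(2)])
      have tS: "\<And>k. t + tk k \<in> nonneg_times S" using nn_add[OF S t tk(1)] .
      show "z \<in> ?om" by (rule omI[OF tS f c])
    qed
    show "?om \<subseteq> ?pi t ` ?om"
    proof
      fix p assume p: "p \<in> ?om"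
      obtain tk where tk: "\<And>k. tk k \<in> nonneg_times S" "filterlim tk at_top sequentially"
          "(\<lambda>k. ?pi (tk k) x0) \<longlonglongrightarrow> p"
        using omE[OF p] by blast
      have "\<forall>\<^sub>F k in sequentially. t \<le> tk k" using tk(2) unfolding filterlim_at_top by blast
      then obtain N where N: "\<And>k. k \<ge> N \<Longrightarrow> t \<le> tk k" unfolding eventually_sequentially by blast
      define tk' where "tk' k = tk (k + N) - t" for k
      have tk'S: "tk' k \<in> nonneg_times S" for k
      proof -
        have "tk (k + N) - t \<in> S" by (rule SF(3)[OF nnS[OF tk(1)] nnS[OF t]])
        moreover have "tk (k + N) - t \<ge> 0" using N[of "k + N"] by simp
        ultimately show ?thesis unfolding tk'_def using nnI by blast
      qed
      have "\<exists>l r. l \<in> K \<and> strict_mono (r::nat\<Rightarrow>nat) \<and> ((\<lambda>k. ?pi (tk' k) x0) \<circ> r) \<longlonglongrightarrow> l"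
        by (rule seqK) (rule trK[OF tk'S])
      then obtain p' and r :: "nat \<Rightarrow> nat" where r: "p' \<in> K" "strict_mono r"
          "((\<lambda>k. ?pi (tk' k) x0) \<circ> r) \<longlonglongrightarrow> p'" by blast
      have sm: "strict_mono (\<lambda>k. r k + N)" using r(2) unfolding strict_mono_def by simp
      have lim1: "filterlim (\<lambda>k. tk (r k + N)) at_top sequentially"
        by (rule filterlim_compose[OF tk(2) filterlim_subseq[OF sm]])
      have lim2: "filterlim (\<lambda>k. tk' (r k)) at_top sequentially"
        unfolding filterlim_at_top
      proof
        fix Z
        have "\<forall>\<^sub>F k in sequentially. Z + t \<le> tk (r k + N)" using lim1 unfolding filterlim_at_top by blast
        then show "\<forall>\<^sub>F k in sequentially. Z \<le> tk' (r k)"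
          by (rule eventually_mono) (simp add: tk'_def)
      qed
      have conv': "(\<lambda>k. ?pi (tk' (r k)) x0) \<longlonglongrightarrow> p'" using r(3) by (simp add: comp_def)
      have p'om: "p' \<in> ?om" by (rule omI[OF _ lim2 conv']) (rule tk'S)
      have p'X: "p' \<in> ?X" using r(1) K(2) by blast
      have inX: "\<forall>k. ?pi (tk' (r k)) x0 \<in> ?X" using piX[OF tk'S x0] by blast
      have A0: "(\<lambda>k. ?pi t (?pi (tk' (r k)) x0)) \<longlonglongrightarrow> ?pi t p'"
        by (rule continuous_on_tendsto_compose[OF picont_t[OF t] conv' p'X always_eventually[OF inX]])
      have eqk: "?pi t (?pi (tk' (r k)) x0) = ?pi (tk (r k + N)) x0" for k
      proof -
        have "?pi t (?pi (tk' (r k)) x0) = ?pi (t + tk' (r k)) x0" using piadd[OF t tk'S x0] by simp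
        moreover have "t + tk' (r k) = tk (r k + N)" unfolding tk'_def by simp
        ultimately show ?thesis by simp
      qed
      have A: "(\<lambda>k. ?pi (tk (r k + N)) x0) \<longlonglongrightarrow> ?pi t p'" using A0 eqk by simp
      have B: "(\<lambda>k. ?pi (tk (r k + N)) x0) \<longlonglongrightarrow> p"
        using LIMSEQ_subseq_LIMSEQ[OF tk(3) sm] by (simp add: comp_def)
      have "p = ?pi t p'" using LIMSEQ_unique[OF B A] .
      then show "p \<in> ?pi t ` ?om" using p'om by blast
    qed
  qed
  have sndom: "snd ` ?om = omega_limit S \<sigma> (snd x0)"
  proof
    show "snd ` ?om \<subseteq> omega_limit S \<sigma> (snd x0)"
    proof
      fix y assume "y \<in> snd ` ?om"
      then obtain p where p: "p \<in> ?om" "y = snd p" by blast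
      obtain tk where tk: "\<And>k. tk k \<in> nonneg_times S" "filterlim tk at_top sequentially"
          "(\<lambda>k. ?pi (tk k) x0) \<longlonglongrightarrow> p"
        using omE[OF p(1)] by blast
      have "(\<lambda>k. snd (?pi (tk k) x0)) \<longlonglongrightarrow> snd p" by (rule tendsto_snd[OF tk(3)])
      then have "(\<lambda>k. \<sigma> (tk k) (snd x0)) \<longlonglongrightarrow> y" using p(2) by (simp add: pisnd)
      then show "y \<in> omega_limit S \<sigma> (snd x0)" unfolding omega_limit_def using tk(1,2) by blast
    qed
    show "omega_limit S \<sigma> (snd x0) \<subseteq> snd ` ?om"
    proof
      fix y assume "y \<in> omega_limit S \<sigma> (snd x0)"
      then obtain tk where tk: "\<And>k. tk k \<in> nonneg_times S" "filterlim tk at_top sequentially"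
          "(\<lambda>k. \<sigma> (tk k) (snd x0)) \<longlonglongrightarrow> y"
        unfolding omega_limit_def by blast
      have "\<exists>l r. l \<in> K \<and> strict_mono (r::nat\<Rightarrow>nat) \<and> ((\<lambda>k. ?pi (tk k) x0) \<circ> r) \<longlonglongrightarrow> l"
        by (rule seqK) (rule trK[OF tk(1)])
      then obtain l and r :: "nat \<Rightarrow> nat" where lr: "l \<in> K" "strict_mono r"
          "((\<lambda>k. ?pi (tk k) x0) \<circ> r) \<longlonglongrightarrow> l" by blast
      have c1: "(\<lambda>k. ?pi (tk (r k)) x0) \<longlonglongrightarrow> l" using lr(3) by (simp add: comp_def)
      have f1: "filterlim (\<lambda>k. tk (r k)) at_top sequentially"
        by (rule filterlim_compose[OF tk(2) filterlim_subseq[OF lr(2)]])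
      have lom: "l \<in> ?om" by (rule omI[OF _ f1 c1]) (rule tk(1))
      have "(\<lambda>k. snd (?pi (tk (r k)) x0)) \<longlonglongrightarrow> snd l" by (rule tendsto_snd[OF c1])
      then have a: "(\<lambda>k. \<sigma> (tk (r k)) (snd x0)) \<longlonglongrightarrow> snd l" by (simp add: pisnd)
      have b: "(\<lambda>k. \<sigma> (tk (r k)) (snd x0)) \<longlonglongrightarrow> y"
        using LIMSEQ_subseq_LIMSEQ[OF tk(3) lr(2)] by (simp add: comp_def)
      have "y = snd l" using LIMSEQ_unique[OF b a] .
      then show "y \<in> snd ` ?om" using lom by blast
    qed
  qed
  have fib: "(let \<Omega> = ?om \<inter> {x. snd x = q}
             in ?pi tau ` \<Omega> = \<Omega> \<and> (\<forall>x\<in>\<Omega>. ?pi tau x = x))"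
    if hq: "(\<lambda>k::nat. \<sigma> (real k * tau) (snd x0)) \<longlonglongrightarrow> q" for q
  proof -
    let ?y0 = "snd x0"
    let ?Om = "?om \<inter> {x. snd x = q}"
    have sc: "continuous_on UNIV (\<sigma> tau)"
    proof -
      have h1: "continuous_on UNIV (\<lambda>y::'y. (tau, y))" by (intro continuous_intros)
      have h2: "(\<lambda>y::'y. (tau, y)) ` UNIV \<subseteq> S \<times> UNIV" using tau(1) by auto
      have "continuous_on UNIV (\<lambda>y. (\<lambda>(t, y). \<sigma> t y) (tau, y))"
        by (rule continuous_on_compose2[OF syscont h1 h2])
      then show ?thesis by simp
    qed
    have nS: "\<And>n. real n * tau \<in> nonneg_times S" using SF(5)[OF tau(1)] tau(2) nnI by simp
    have sig_step: "\<sigma> (real (Suc n) * tau) ?y0 = \<sigma> tau (\<sigma> (real n * tau) ?y0)" for n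
    proof -
      have "real (Suc n) * tau = tau + real n * tau" by (simp add: algebra_simps)
      moreover have "\<sigma> (tau + real n * tau) ?y0 = \<sigma> tau (\<sigma> (real n * tau) ?y0)"
        using sysadd tau(1) nnS[OF nS] by blast
      ultimately show ?thesis by simp
    qed
    have qfix: "\<sigma> tau q = q"
    proof -
      have a: "(\<lambda>n. \<sigma> tau (\<sigma> (real n * tau) ?y0)) \<longlonglongrightarrow> \<sigma> tau q"
        by (rule continuous_on_tendsto_compose[OF sc hq]) auto
      have b: "(\<lambda>n. \<sigma> tau (\<sigma> (real n * tau) ?y0)) \<longlonglongrightarrow> q"
        using LIMSEQ_Suc[OF hq] sig_step by simp
      show ?thesis using LIMSEQ_unique[OF b a] by simp
    qed
    have fx0: "fst x0 \<in> W" using x0 by (auto simp: mem_Times_iff)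
    have fixall: "?pi tau x = x" if xo: "x \<in> ?om" and xq: "snd x = q" for x
    proof -
      obtain tk where tk: "\<And>k. tk k \<in> nonneg_times S" "filterlim tk at_top sequentially"
          "(\<lambda>k. ?pi (tk k) x0) \<longlonglongrightarrow> x"
        using omE[OF xo] by blast
      define nk where "nk k = nat \<lfloor>tk k / tau\<rfloor>" for k
      define sk where "sk k = tk k - real (nk k) * tau" for k
      have dec: "real (nk k) * tau \<le> tk k" "tk k < real (nk k) * tau + tau" for k
        unfolding nk_def using floor_dec[OF tau(2) nnge[OF tk(1)]] by auto
      have skS: "sk k \<in> {0..tau} \<inter> S" for k
      proof -
        have "tk k - real (nk k) * tau \<in> S" by (rule SF(3)[OF nnS[OF tk(1)] SF(5)[OF tau(1)]])
        then show ?thesis using dec[of k] unfolding sk_def by auto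
      qed
      have nklim: "filterlim nk at_top sequentially"
        unfolding filterlim_at_top
      proof
        fix Z :: nat
        have "\<forall>\<^sub>F k in sequentially. (real Z + 1) * tau \<le> tk k"
          using tk(2) unfolding filterlim_at_top by blast
        then show "\<forall>\<^sub>F k in sequentially. Z \<le> nk k"
        proof (rule eventually_mono)
          fix k assume h: "(real Z + 1) * tau \<le> tk k"
          then have "(real Z + 1) * tau < (real (nk k) + 1) * tau" using dec(2)[of k]
            by (simp add: algebra_simps)
          then have "real Z < real (nk k)" using tau(2) by (simp add: mult_less_cancel_right)
          then show "Z \<le> nk k" by simp
        qed
      qed
      let ?C = "({0..tau} \<inter> S) \<times> K"
      have Cc: "compact ?C" by (intro compact_Times compact_Int_closed compact_Icc SF(6) K(1))
      have zC: "\<forall>n. (sk n, ?pi (real (nk n) * tau) x0) \<in> ?C" using skS trK[OF nS] by blast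
      from seq_compactE[OF compact_imp_seq_compact[OF Cc] zC] obtain l and r :: "nat \<Rightarrow> nat"
        where lr: "l \<in> ?C" "strict_mono r" "((\<lambda>n. (sk n, ?pi (real (nk n) * tau) x0)) \<circ> r) \<longlonglongrightarrow> l" .
      obtain s x' where l: "l = (s, x')" by (cases l)
      have zr: "(\<lambda>j. (sk (r j), ?pi (real (nk (r j)) * tau) x0)) \<longlonglongrightarrow> (s, x')"
        using lr(3) l by (simp add: comp_def)
      have xr: "(\<lambda>j. ?pi (real (nk (r j)) * tau) x0) \<longlonglongrightarrow> x'" using tendsto_snd[OF zr] by simp
      have sS: "s \<in> nonneg_times S" using lr(1) l nnI by auto
      have x'X: "x' \<in> ?X" using lr(1) l K(2) by auto
      have skn: "\<And>k. sk k \<in> nonneg_times S" using skS nnI by auto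
      have decomp: "?pi (tk k) x0 = ?pi (sk k) (?pi (real (nk k) * tau) x0)" for k
      proof -
        have "tk k = sk k + real (nk k) * tau" unfolding sk_def by simp
        then show ?thesis using piadd[OF skn nS x0] by simp
      qed
      have a: "(\<lambda>j. ?pi (tk (r j)) x0) \<longlonglongrightarrow> x"
        using LIMSEQ_subseq_LIMSEQ[OF tk(3) lr(2)] by (simp add: comp_def)
      have b: "(\<lambda>j. ?pi (tk (r j)) x0) \<longlonglongrightarrow> ?pi s x'"
      proof -
        have inD: "\<forall>j. (sk (r j), ?pi (real (nk (r j)) * tau) x0) \<in> nonneg_times S \<times> ?X"
          using skn piX[OF nS x0] by blast
        have sxD: "(s, x') \<in> nonneg_times S \<times> ?X" using sS x'X by blast
        have "(\<lambda>j. (\<lambda>p. ?pi (fst p) (snd p)) (sk (r j), ?pi (real (nk (r j)) * tau) x0))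
              \<longlonglongrightarrow> (\<lambda>p. ?pi (fst p) (snd p)) (s, x')"
          by (rule continuous_on_tendsto_compose[OF picont zr sxD always_eventually[OF inD]])
        then show ?thesis using decomp by simp
      qed
      have xeq: "x = ?pi s x'" using LIMSEQ_unique[OF a b] .
      have nkr: "filterlim (\<lambda>j. nk (r j)) at_top sequentially"
        by (rule filterlim_compose[OF nklim filterlim_subseq[OF lr(2)]])
      have q1: "(\<lambda>j. \<sigma> (real (nk (r j)) * tau) ?y0) \<longlonglongrightarrow> q"
        using filterlim_compose[OF hq nkr] by simp
      have q2: "(\<lambda>j. \<sigma> (real (nk (r j)) * tau) ?y0) \<longlonglongrightarrow> snd x'"
        using tendsto_snd[OF xr] by (simp add: pisnd)
      have x'q: "snd x' = q" using LIMSEQ_unique[OF q2 q1] .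
      define u where "u n = fst (?pi (real n * tau) x0)" for n
      define g where "g n w = phi tau w (\<sigma> (real n * tau) ?y0)" for n w
      define f where "f w = phi tau w q" for w
      have uW: "\<And>n. u n \<in> W" unfolding u_def using piX[OF nS x0] by (auto simp: mem_Times_iff)
      have fK: "compact (fst ` K)" by (intro compact_continuous_image continuous_intros K(1))
      have fKne: "fst ` K \<noteq> {}" using x0K by blast
      obtain lo where lo: "lo \<in> fst ` K" "\<forall>y\<in>fst ` K. lo \<le> y"
        using compact_attains_inf[OF fK fKne] by blast
      obtain hi where hi: "hi \<in> fst ` K" "\<forall>y\<in>fst ` K. y \<le> hi"
        using compact_attains_sup[OF fK fKne] by blast
      have fKW: "fst ` K \<subseteq> W" using K(2) by auto
      have uK: "\<And>n. u n \<in> fst ` K" unfolding u_def using trK[OF nS] by blast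
      have loW: "lo \<in> W" using lo(1) fKW by blast
      have lou: "\<And>n. lo \<le> u n" using lo(2) uK by blast
      have hiW: "hi \<in> W" using hi(1) fKW by blast
      have hiu: "\<And>n. u n \<le> hi" using hi(2) uK by blast
      have rec: "u (Suc n) = g n (u n)" for n
      proof -
        have "real (Suc n) * tau = tau + real n * tau" by (simp add: algebra_simps)
        moreover have "phi (tau + real n * tau) (fst x0) ?y0
            = phi tau (phi (real n * tau) (fst x0) ?y0) (\<sigma> (real n * tau) ?y0)"
          using cadd[rule_format, OF tauS nS fx0] .
        ultimately show ?thesis unfolding u_def g_def pifst by simp
      qed
      have mono': "\<And>n a b. a \<in> W \<Longrightarrow> b \<in> W \<Longrightarrow> a \<le> b \<Longrightarrow> g n a \<le> g n b"
        unfolding g_def using mono tauS unfolding monotone_cocycle_def by blast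
      have conv: "(\<lambda>n. g n w) \<longlonglongrightarrow> f w" if w: "w \<in> W" for w
      proof -
        have t3: "(\<lambda>n. (tau, w, \<sigma> (real n * tau) ?y0)) \<longlonglongrightarrow> (tau, w, q)"
          by (intro tendsto_Pair tendsto_const hq)
        have in3: "\<forall>n. (tau, w, \<sigma> (real n * tau) ?y0) \<in> nonneg_times S \<times> W \<times> UNIV"
          using tauS w by blast
        have in3': "(tau, w, q) \<in> nonneg_times S \<times> W \<times> UNIV" using tauS w by blast
        have "(\<lambda>n. (\<lambda>(t, u, y). phi t u y) (tau, w, \<sigma> (real n * tau) ?y0))
             \<longlonglongrightarrow> (\<lambda>(t, u, y). phi t u y) (tau, w, q)"
          by (rule continuous_on_tendsto_compose[OF ccont t3 in3' always_eventually[OF in3]])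
        then show ?thesis unfolding g_def f_def by simp
      qed
      have fc: "continuous_on W f"
      proof -
        have h1: "continuous_on W (\<lambda>w. (tau, w, q))" by (intro continuous_intros)
        have h2: "(\<lambda>w. (tau, w, q)) ` W \<subseteq> nonneg_times S \<times> W \<times> UNIV" using tauS by auto
        have "continuous_on W (\<lambda>w. (\<lambda>(t, u, y). phi t u y) (tau, w, q))"
          by (rule continuous_on_compose2[OF ccont h1 h2])
        then show ?thesis unfolding f_def by simp
      qed
      have u'W: "fst x' \<in> W" using x'X by (auto simp: mem_Times_iff)
      have lp: "\<exists>n\<ge>N. \<bar>u n - fst x'\<bar> < e" if e: "e > 0" for e :: real and N :: nat
      proof -
        have ev1: "\<forall>\<^sub>F j in sequentially. N \<le> nk (r j)" using nkr unfolding filterlim_at_top by blast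
        have ev2: "\<forall>\<^sub>F j in sequentially. dist (?pi (real (nk (r j)) * tau) x0) x' < e"
          using tendstoD[OF xr e] .
        obtain j where j: "N \<le> nk (r j)" "dist (?pi (real (nk (r j)) * tau) x0) x' < e"
          using eventually_conj[OF ev1 ev2] unfolding eventually_sequentially by blast
        have "\<bar>u (nk (r j)) - fst x'\<bar> \<le> dist (?pi (real (nk (r j)) * tau) x0) x'"
          unfolding u_def using dist_fst_le[of "?pi (real (nk (r j)) * tau) x0" x']
          by (simp add: dist_real_def)
        then show ?thesis using j by force
      qed
      have le1: "f (fst x') \<le> fst x'" by (rule trap_up[OF W uW loW lou rec mono' conv fc u'W lp])
      have le2: "fst x' \<le> f (fst x')" by (rule trap_down[OF W uW hiW hiu rec mono' conv fc u'W lp])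
      have fixu: "phi tau (fst x') q = fst x'" using le1 le2 unfolding f_def by simp
      have Px': "?pi tau x' = x'" unfolding skew_product_def using fixu qfix x'q
        by (simp add: prod_eq_iff)
      have "?pi tau x = ?pi (tau + s) x'" using xeq piadd[OF tauS sS x'X] by simp
      also have "\<dots> = ?pi (s + tau) x'" by (simp add: add.commute)
      also have "\<dots> = ?pi s (?pi tau x')" using piadd[OF sS tauS x'X] .
      also have "\<dots> = x" using Px' xeq by simp
      finally show ?thesis .
    qed
    have A: "\<forall>x\<in>?Om. ?pi tau x = x" using fixall by blast
    have "?pi tau ` ?Om = (\<lambda>x. x) ` ?Om" using A by (intro image_cong) auto
    then have "?pi tau ` ?Om = ?Om" by simp
    with A show ?thesis unfolding Let_def by blast
  qed
  show ?thesis using ne cpt inv sndom fib by blast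
qed

end
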